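(* Let $0<\alpha<1$ and $1\le i\le k\le 6$, and let $\omega^{(k,i)}_m$, $m\ge0$, be the convolution weights defined in the context. Then $\sum_{m=0}^{\infty}|\omega^{(k,i)}_m|<\infty$.
   Context: Uniform grid $t_n=n\Delta t$, $\Delta t>0$, $I_j=[t_{j-1},t_j]$. For a function $u$ and integers $m\ge1$, $j$, $q$, let $p^{m}_{j,q}$ be the polynomial of degree at most $m$ interpolating $u$ at $t_{j+q-m-1},\dots,t_{j+q-1}$. For $1\le i\le k\le 6$ and $n\ge k$, let $P^{k}_{i,n}$ be the continuous piecewise polynomial on $[0,t_n]$ equal on $I_j$ to $p^{k-1}_{j,k-j}$ for $1\le j\le k-i$, to $p^{k}_{j,i}$ for $k-i+1\le j\le n-i+1$, and to $p^{k}_{j,n+1-j}$ for $n-i+2\le j\le n$, and set $D^{\alpha}_{k,i}u_n=\frac{1}{\Gamma(1-\alpha)}\int_0^{t_n}(t_n-\xi)^{-\alpha}(P^{k}_{i,n})'(\xi)\,\mathrm{d}\xi$. This is a linear combination of $u_0=u(t_0),\dots,u_n=u(t_n)$; for $k\le j\le n$ the coefficient of $u_j$ in $(\Delta t)^{\alpha}D^{\alpha}_{k,i}u_n$ depends only on $n-j$ and is denoted $\omega^{(k,i)}_{n-j}$; this defines $\omega^{(k,i)}_m$ for all $m\ge 0$. *)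

theory Defs
  imports "HOL-Analysis.Analysis"
begin

definition grid :: "real \<Rightarrow> nat \<Rightarrow> real" where
  "grid dt a = real a * dt"

definition lagr :: "real \<Rightarrow> (nat \<Rightarrow> real) \<Rightarrow> nat set \<Rightarrow> real \<Rightarrow> real" where
  "lagr dt v N t = (\<Sum>a\<in>N. v a * (\<Prod>b\<in>N - {a}. (t - grid dt b) / (grid dt a - grid dt b)))"

definition nodes :: "nat \<Rightarrow> nat \<Rightarrow> nat \<Rightarrow> nat set" where
  "nodes m j q = nat ` {int j + int q - int m - 1 .. int j + int q - 1}"

definition piece_nodes :: "nat \<Rightarrow> nat \<Rightarrow> nat \<Rightarrow> nat \<Rightarrow> nat set" where
  "piece_nodes k i n j =
     (if j \<le> k - i then nodes (k - 1) j (k - j)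
      else if j \<le> n - i + 1 then nodes k j i
      else nodes k j (n + 1 - j))"

text \<open>D^alpha_{k,i} u_n, for grid data v (u_a = v a); the integral over [0,t_n]
  is split over the intervals I_j, on which (P^k_{i,n})' is the derivative of
  the corresponding interpolating polynomial.\<close>
definition Dfrac :: "nat \<Rightarrow> nat \<Rightarrow> real \<Rightarrow> real \<Rightarrow> (nat \<Rightarrow> real) \<Rightarrow> nat \<Rightarrow> real" where
  "Dfrac k i \<alpha> dt v n =
     1 / Gamma (1 - \<alpha>) *
     (\<Sum>j=1..n. integral {grid dt (j - 1) .. grid dt j}
        (\<lambda>\<xi>. (grid dt n - \<xi>) powr (- \<alpha>) * deriv (lagr dt v (piece_nodes k i n j)) \<xi>))"

text \<open>Coefficient of u_j in (dt)^alpha D^alpha_{k,i} u_n (by linearity, the value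
  on the discrete Kronecker delta at j).\<close>
definition coeff :: "nat \<Rightarrow> nat \<Rightarrow> real \<Rightarrow> real \<Rightarrow> nat \<Rightarrow> nat \<Rightarrow> real" where
  "coeff k i \<alpha> dt n j = dt powr \<alpha> * Dfrac k i \<alpha> dt (\<lambda>a. if a = j then 1 else 0) n"

text \<open>omega^{(k,i)}_m = coefficient of u_j with n - j = m, taking j = k, n = m + k.\<close>
definition omega :: "nat \<Rightarrow> nat \<Rightarrow> real \<Rightarrow> real \<Rightarrow> nat \<Rightarrow> real" where
  "omega k i \<alpha> dt m = coeff k i \<alpha> dt (m + k) k"

end

theory Submission imports Defs "HOL-Computational_Algebra.Polynomial" begin

lemma lagr_poly: "\<exists>p. lagr dt v N = poly p"
proof
  let ?p = "\<Sum>a\<in>N. smult (v a) (\<Prod>b\<in>N - {a}. [: - grid dt b / (grid dt a - grid dt b), 1 / (grid dt a - grid dt b) :])"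
  show "lagr dt v N = poly ?p"
    by (rule ext) (simp add: lagr_def poly_sum poly_prod diff_divide_distrib)
qed

lemma lagr_interp:
  assumes "finite N" "c \<in> N" "dt \<noteq> 0"
  shows "lagr dt v N (grid dt c) = v c"
proof -
  have inj: "\<And>a b. grid dt a = grid dt b \<longleftrightarrow> a = b" using assms(3) by (auto simp: grid_def)
  have "lagr dt v N (grid dt c) = v c * (\<Prod>b\<in>N - {c}. (grid dt c - grid dt b) / (grid dt c - grid dt b))
     + (\<Sum>a\<in>N - {c}. v a * (\<Prod>b\<in>N - {a}. (grid dt c - grid dt b) / (grid dt a - grid dt b)))"
    unfolding lagr_def using assms by (simp add: sum.remove)
  also have "(\<Prod>b\<in>N - {c}. (grid dt c - grid dt b) / (grid dt c - grid dt b)) = 1"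
    by (rule prod.neutral) (use inj in auto)
  also have "(\<Sum>a\<in>N - {c}. v a * (\<Prod>b\<in>N - {a}. (grid dt c - grid dt b) / (grid dt a - grid dt b))) = 0"
  proof (rule sum.neutral, intro ballI)
    fix a assume a: "a \<in> N - {c}"
    have "(\<Prod>b\<in>N - {a}. (grid dt c - grid dt b) / (grid dt a - grid dt b)) = 0"
      using assms a by (subst prod_zero_iff) auto
    then show "v a * (\<Prod>b\<in>N - {a}. (grid dt c - grid dt b) / (grid dt a - grid dt b)) = 0" by simp
  qed
  finally show ?thesis by simp
qed

lemma lagr_zero:
  assumes "\<forall>a\<in>N. v a = 0"
  shows "lagr dt v N = (\<lambda>_. 0)"
  using assms by (auto simp: lagr_def intro!: ext sum.neutral)

lemma nodes_finite: "finite (nodes m j q)"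
  by (simp add: nodes_def)

lemma nodes_ge: "x \<in> nodes m j q \<Longrightarrow> int x \<ge> int j + int q - int m - 1"
  by (auto simp: nodes_def)

lemma nodes_mem: "int j + int q - int m - 1 \<le> int x \<Longrightarrow> int x \<le> int j + int q - 1 \<Longrightarrow> x \<in> nodes m j q"
  unfolding nodes_def by (rule image_eqI[of _ _ "int x"]) auto

lemma deriv_poly: "deriv (poly p) x = poly (pderiv p) x"
  by (rule DERIV_imp_deriv) (rule poly_DERIV)


lemma interval_est:
  fixes p :: "real poly" and \<alpha> a b tW tn B :: real
  assumes "0 \<le> a" "a \<le> b" "b \<le> tW" "tW < tn" "0 < \<alpha>"
    and B: "\<And>x. x \<in> {a..b} \<Longrightarrow> \<bar>poly (pderiv p) x\<bar> \<le> B"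
  shows "\<bar>integral {a..b} (\<lambda>\<xi>. (tn - \<xi>) powr (-\<alpha>) * poly (pderiv p) \<xi>) - tn powr (-\<alpha>) * (poly p b - poly p a)\<bar>
         \<le> B * ((tn - tW) powr (-\<alpha>) - tn powr (-\<alpha>)) * (b - a)"
proof -
  define g where "g \<xi> = (tn - \<xi>) powr (-\<alpha>)" for \<xi>
  have cg: "continuous_on {a..b} g" unfolding g_def
    by (intro continuous_intros) (use assms in auto)
  have cq: "continuous_on {a..b} (\<lambda>\<xi>. poly (pderiv p) \<xi>)" by (intro continuous_intros)
  have c1: "continuous_on {a..b} (\<lambda>\<xi>. (g \<xi> - g 0) * poly (pderiv p) \<xi>)"
    by (intro continuous_intros cg cq)
  have i1: "(\<lambda>\<xi>. (g \<xi> - g 0) * poly (pderiv p) \<xi>) integrable_on {a..b}"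
    by (rule integrable_continuous_real[OF c1])
  have i2: "((\<lambda>\<xi>. g 0 * poly (pderiv p) \<xi>) has_integral g 0 * (poly p b - poly p a)) {a..b}"
    apply (rule has_integral_mult_right)
    apply (rule fundamental_theorem_of_calculus[OF assms(2)])
    by (metis has_field_derivative_at_within has_real_derivative_iff_has_vector_derivative poly_DERIV)
  have "((\<lambda>\<xi>. (g \<xi> - g 0) * poly (pderiv p) \<xi> + g 0 * poly (pderiv p) \<xi>) has_integral
      integral {a..b} (\<lambda>\<xi>. (g \<xi> - g 0) * poly (pderiv p) \<xi>) + g 0 * (poly p b - poly p a)) {a..b}"
    by (rule has_integral_add[OF integrable_integral[OF i1] i2])
  moreover have "(\<lambda>\<xi>. (g \<xi> - g 0) * poly (pderiv p) \<xi> + g 0 * poly (pderiv p) \<xi>) = (\<lambda>\<xi>. g \<xi> * poly (pderiv p) \<xi>)"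
    by (auto simp: algebra_simps)
  ultimately have eq: "integral {a..b} (\<lambda>\<xi>. g \<xi> * poly (pderiv p) \<xi>) = integral {a..b} (\<lambda>\<xi>. (g \<xi> - g 0) * poly (pderiv p) \<xi>) + g 0 * (poly p b - poly p a)"
    by (metis integral_unique)
  have "\<bar>poly (pderiv p) a\<bar> \<le> B" using assms(2) by (intro B) auto
  then have B0: "0 \<le> B" by (metis abs_ge_zero order_trans)
  have bnd: "norm (integral {a..b} (\<lambda>\<xi>. (g \<xi> - g 0) * poly (pderiv p) \<xi>)) \<le> (B * (g tW - g 0)) * (b - a)"
  proof (rule integral_bound[OF assms(2) c1])
    fix x assume x: "x \<in> {a..b}"
    have l: "g 0 \<le> g x" unfolding g_def using x assms by (intro powr_mono2') auto
    have u: "g x \<le> g tW" unfolding g_def using x assms by (intro powr_mono2') auto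
    have "\<bar>(g x - g 0) * poly (pderiv p) x\<bar> = (g x - g 0) * \<bar>poly (pderiv p) x\<bar>" using l by (simp add: abs_mult)
    also have "\<dots> \<le> (g tW - g 0) * B" using l u B[OF x] by (intro mult_mono) auto
    finally show "norm ((g x - g 0) * poly (pderiv p) x) \<le> B * (g tW - g 0)" by (simp add: mult.commute)
  qed
  show ?thesis using eq bnd unfolding g_def by (simp add: mult.assoc)
qed

lemma sum_tel1: fixes W :: nat shows "(\<Sum>j=1..W. f j - f (j - 1)) = f W - (f 0 :: real)"
  by (induction W) (auto simp: algebra_simps)


lemma h_lim:
  fixes dt \<alpha> :: real and c :: nat and d :: real
  assumes "0 < dt" "0 < \<alpha>"
  shows "(\<lambda>m. (real (m + c) * dt - d) powr (-\<alpha>)) \<longlonglongrightarrow> 0"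
proof (rule tendsto_neg_powr)
  show "-\<alpha> < 0" using assms by simp
  show "filterlim (\<lambda>m. real (m + c) * dt - d) at_top sequentially"
    unfolding filterlim_at_top eventually_sequentially
  proof
    fix Z :: real
    obtain N :: nat where N: "(Z + d) / dt \<le> real N" using real_arch_simple by blast
    show "\<exists>N. \<forall>m\<ge>N. Z \<le> real (m + c) * dt - d"
    proof (intro exI allI impI)
      fix m assume "N \<le> m"
      then have "(Z + d) / dt \<le> real (m + c)" using N by linarith
      then show "Z \<le> real (m + c) * dt - d" using assms(1) by (simp add: field_simps)
    qed
  qed
qed

lemma summable_h:
  fixes dt \<alpha> K :: real and k W :: nat
  assumes "0 < dt" "0 < \<alpha>"
  defines "h \<equiv> \<lambda>m. (real (m + k) * dt - real W * dt) powr (-\<alpha>)"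
  shows "summable (\<lambda>m. K * (h m - h (m + W)))"
proof -
  have eq: "h m - h (m + W) = (\<Sum>l<W. h (m + l) - h (m + Suc l))" for m
    using sum_lessThan_telescope'[of "\<lambda>l. h (m + l)" W] by simp
  have "summable (\<lambda>m. \<Sum>l<W. h (m + l) - h (m + Suc l))"
  proof (rule summable_sum)
    fix l assume "l \<in> {..<W}"
    have "(\<lambda>m. h (m + l)) \<longlonglongrightarrow> 0" unfolding h_def
      using h_lim[OF assms(1,2), of "l + k" "real W * dt"] by (simp add: add.assoc)
    from telescope_summable'[OF this] show "summable (\<lambda>m. h (m + l) - h (m + Suc l))" by simp
  qed
  then show ?thesis unfolding eq by (rule summable_mult)
qed


theorem lemma3p5:
  fixes \<alpha> dt :: real and k i :: nat
  assumes "0 < \<alpha>" "\<alpha> < 1" "1 \<le> i" "i \<le> k" "k \<le> 6" "0 < dt"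
  shows "summable (\<lambda>m. \<bar>omega k i \<alpha> dt m\<bar>)"
proof -
  define \<delta> where "\<delta> = (\<lambda>a::nat. if a = k then 1 else (0::real))"
  define W where "W = 2 * k + 1"
  define Q where "Q j = (if j \<le> k - i then nodes (k - 1) j (k - j) else nodes k j i)" for j
  have "\<forall>j. \<exists>p. lagr dt \<delta> (Q j) = poly p" using lagr_poly by blast
  then obtain P where P: "\<And>j. lagr dt \<delta> (Q j) = poly (P j)" by metis
  have "\<forall>j. \<exists>B. \<forall>x\<in>{grid dt (j - 1)..grid dt j}. \<bar>poly (pderiv (P j)) x\<bar> \<le> B"
  proof
    fix j
    have "bounded ((\<lambda>x. poly (pderiv (P j)) x) ` {grid dt (j - 1)..grid dt j})"
      by (intro compact_imp_bounded compact_continuous_image continuous_intros) auto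
    then show "\<exists>B. \<forall>x\<in>{grid dt (j - 1)..grid dt j}. \<bar>poly (pderiv (P j)) x\<bar> \<le> B"
      unfolding bounded_iff by auto
  qed
  then obtain Bf where Bf: "\<And>j x. x \<in> {grid dt (j - 1)..grid dt j} \<Longrightarrow> \<bar>poly (pderiv (P j)) x\<bar> \<le> Bf j"
    by metis
  define C where "C = (\<Sum>j=1..W. \<bar>Bf j\<bar>)"
  define h where "h = (\<lambda>m. (real (m + k) * dt - real W * dt) powr (-\<alpha>))"
  define K where "K = dt powr \<alpha> * \<bar>1 / Gamma (1 - \<alpha>)\<bar> * C * dt"
  have Qfin: "finite (Q j)" for j by (simp add: Q_def nodes_finite)
  have Qmem: "j - 1 \<in> Q j \<and> j \<in> Q j" if "1 \<le> j" for j
    unfolding Q_def using that assms(3,4) by (auto intro!: nodes_mem)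
  have Pval: "poly (P j) (grid dt a) = \<delta> a" if "a \<in> Q j" for j a
  proof -
    have "lagr dt \<delta> (Q j) (grid dt a) = \<delta> a"
      by (rule lagr_interp[OF Qfin that]) (use assms(6) in simp)
    then show ?thesis by (simp add: P)
  qed
  show ?thesis
  proof (rule summable_comparison_test'[where N = "2 * k + 2"])
    show "summable (\<lambda>m. K * (h m - h (m + W)))"
      unfolding h_def by (rule summable_h[OF assms(6,1)])
  next
    fix m :: nat assume m: "2 * k + 2 \<le> m"
    define n where "n = m + k"
    define g where "g \<xi> = (grid dt n - \<xi>) powr (-\<alpha>)" for \<xi>
    define S where "S = (\<Sum>j=1..n. integral {grid dt (j - 1) .. grid dt j}
        (\<lambda>\<xi>. (grid dt n - \<xi>) powr (- \<alpha>) * deriv (lagr dt \<delta> (piece_nodes k i n j)) \<xi>))"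
    have om: "omega k i \<alpha> dt m = dt powr \<alpha> * (1 / Gamma (1 - \<alpha>) * S)"
      unfolding omega_def coeff_def Dfrac_def S_def n_def \<delta>_def by simp
    have S: "S = (\<Sum>j=1..W. integral {grid dt (j - 1) .. grid dt j}
        (\<lambda>\<xi>. g \<xi> * poly (pderiv (P j)) \<xi>))"
      unfolding S_def
    proof (rule sum.mono_neutral_cong_right)
      show "finite {1..n}" by simp
      show "{1..W} \<subseteq> {1..n}" using m by (auto simp: W_def n_def)
      show "\<forall>j\<in>{1..n} - {1..W}. integral {grid dt (j - 1)..grid dt j}
          (\<lambda>\<xi>. (grid dt n - \<xi>) powr - \<alpha> * deriv (lagr dt \<delta> (piece_nodes k i n j)) \<xi>) = 0"
      proof
        fix j assume j: "j \<in> {1..n} - {1..W}"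
        have "k \<notin> piece_nodes k i n j"
        proof
          assume kin: "k \<in> piece_nodes k i n j"
          show False
          proof (cases "j \<le> n - i + 1")
            case True
            then have "k \<in> nodes k j i" using kin j by (auto simp: piece_nodes_def W_def split: if_split_asm)
            from nodes_ge[OF this] show False using j by (auto simp: W_def)
          next
            case False
            then have "k \<in> nodes k j (n + 1 - j)" using kin j by (auto simp: piece_nodes_def W_def split: if_split_asm)
            from nodes_ge[OF this] show False using j m by (auto simp: W_def n_def of_nat_diff)
          qed
        qed
        then have "lagr dt \<delta> (piece_nodes k i n j) = (\<lambda>_. 0)"
          by (intro lagr_zero) (auto simp: \<delta>_def)
        then show "integral {grid dt (j - 1)..grid dt j}
          (\<lambda>\<xi>. (grid dt n - \<xi>) powr - \<alpha> * deriv (lagr dt \<delta> (piece_nodes k i n j)) \<xi>) = 0"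
          by simp
      qed
      fix j assume j: "j \<in> {1..W}"
      have "piece_nodes k i n j = Q j"
        using j m assms(4) by (auto simp: piece_nodes_def Q_def W_def n_def)
      then show "integral {grid dt (j - 1)..grid dt j}
          (\<lambda>\<xi>. (grid dt n - \<xi>) powr - \<alpha> * deriv (lagr dt \<delta> (piece_nodes k i n j)) \<xi>) =
        integral {grid dt (j - 1)..grid dt j} (\<lambda>\<xi>. g \<xi> * poly (pderiv (P j)) \<xi>)"
        by (simp add: P deriv_poly g_def)
    qed
    have est: "\<bar>integral {grid dt (j - 1) .. grid dt j} (\<lambda>\<xi>. g \<xi> * poly (pderiv (P j)) \<xi>)
        - g 0 * (\<delta> j - \<delta> (j - 1))\<bar> \<le> \<bar>Bf j\<bar> * (g (grid dt W) - g 0) * dt"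
      if j: "j \<in> {1..W}" for j
    proof -
      have "\<bar>integral {grid dt (j - 1) .. grid dt j} (\<lambda>\<xi>. (grid dt n - \<xi>) powr (-\<alpha>) * poly (pderiv (P j)) \<xi>)
        - (grid dt n) powr (-\<alpha>) * (poly (P j) (grid dt j) - poly (P j) (grid dt (j - 1)))\<bar>
        \<le> \<bar>Bf j\<bar> * ((grid dt n - grid dt W) powr (-\<alpha>) - (grid dt n) powr (-\<alpha>)) * (grid dt j - grid dt (j - 1))"
      proof (rule interval_est)
        show "0 \<le> grid dt (j - 1)" using assms(6) by (simp add: grid_def)
        show "grid dt (j - 1) \<le> grid dt j" using assms(6) by (simp add: grid_def)
        show "grid dt j \<le> grid dt W" using assms(6) j by (simp add: grid_def)
        show "grid dt W < grid dt n" using assms(6) m by (simp add: grid_def W_def n_def)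
        show "0 < \<alpha>" by (rule assms(1))
        show "\<bar>poly (pderiv (P j)) x\<bar> \<le> \<bar>Bf j\<bar>" if "x \<in> {grid dt (j - 1)..grid dt j}" for x
          using Bf[OF that] by linarith
      qed
      moreover have "poly (P j) (grid dt j) = \<delta> j" "poly (P j) (grid dt (j - 1)) = \<delta> (j - 1)"
        using Pval Qmem j by auto
      moreover have "grid dt j - grid dt (j - 1) = dt" using j by (auto simp: grid_def of_nat_diff algebra_simps)
      ultimately show ?thesis by (simp add: g_def)
    qed
    have tel: "(\<Sum>j=1..W. g 0 * (\<delta> j - \<delta> (j - 1))) = 0"
    proof -
      have "(\<Sum>j=1..W. g 0 * (\<delta> j - \<delta> (j - 1))) = g 0 * (\<Sum>j=1..W. \<delta> j - \<delta> (j - 1))"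
        by (simp add: sum_distrib_left)
      also have "\<dots> = g 0 * (\<delta> W - \<delta> 0)" using sum_tel1[of \<delta> W] by simp
      also have "\<dots> = 0" using assms(3,4) by (simp add: \<delta>_def W_def)
      finally show ?thesis .
    qed
    have "\<bar>S\<bar> = \<bar>\<Sum>j=1..W. integral {grid dt (j - 1) .. grid dt j} (\<lambda>\<xi>. g \<xi> * poly (pderiv (P j)) \<xi>)
        - g 0 * (\<delta> j - \<delta> (j - 1))\<bar>"
      unfolding S sum_subtractf tel by simp
    also have "\<dots> \<le> (\<Sum>j=1..W. \<bar>integral {grid dt (j - 1) .. grid dt j} (\<lambda>\<xi>. g \<xi> * poly (pderiv (P j)) \<xi>)
        - g 0 * (\<delta> j - \<delta> (j - 1))\<bar>)" by (rule sum_abs)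
    also have "\<dots> \<le> (\<Sum>j=1..W. \<bar>Bf j\<bar> * (g (grid dt W) - g 0) * dt)" by (rule sum_mono) (rule est)
    also have "\<dots> = C * dt * (g (grid dt W) - g 0)"
      unfolding C_def sum_distrib_right by (simp add: mult_ac)
    also have "g (grid dt W) - g 0 = h m - h (m + W)"
      by (simp add: g_def h_def grid_def n_def algebra_simps)
    finally have Sb: "\<bar>S\<bar> \<le> C * dt * (h m - h (m + W))" .
    have "norm \<bar>omega k i \<alpha> dt m\<bar> = dt powr \<alpha> * \<bar>1 / Gamma (1 - \<alpha>)\<bar> * \<bar>S\<bar>"
      unfolding om by (simp add: abs_mult)
    also have "\<dots> \<le> dt powr \<alpha> * \<bar>1 / Gamma (1 - \<alpha>)\<bar> * (C * dt * (h m - h (m + W)))"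
      by (intro mult_left_mono Sb) auto
    also have "\<dots> = K * (h m - h (m + W))" by (simp add: K_def)
    finally show "norm \<bar>omega k i \<alpha> dt m\<bar> \<le> K * (h m - h (m + W))" .
  qed
qed

end
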